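(* Assume (A.1)–(A.6), and assume moreover that the stochastic function values have bounded variance: $\mathbb{E}_{\xi_t}|f(x_t;\xi_t)-f(x_t)|^2\le\sigma_f^2$ for all $t$. Run the SG-SAV iteration with $r_0=\sqrt{f(x_0)+c}$ for $T\ge1$ steps, and suppose the learning rate $\eta>0$ satisfies $$C_1\sqrt\eta+C_2\eta+C_3\le0,$$ where, with $F(x_0):=\sqrt{f(x_0)+c}$, $$C_1=F(x_0)\sqrt{T\Big(\frac{\gamma^2}{8a^3}\sigma_f^2+\frac1{2a}\sigma_0^2\Big)},\qquad C_2=\frac{L_F\,F(x_0)^2}{2},\qquad C_3=\frac{\sigma_f}{2\sqrt a}-\frac{\sqrt a}{2}.$$ Then $\mathbb{E}[r_T]\ge\frac{\sqrt a}{2}>0$.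
   Context: Let $f:\mathbb{R}^d\to\mathbb{R}$ be continuously differentiable and let $c\ge0$ be a constant with $f^*:=\inf_{x}f(x)>-c$. Let $\xi_0,\xi_1,\dots$ be random variables (mini-batch samples). For each $x\in\mathbb{R}^d$ and sample $\xi$, let $f(x;\xi)\in\mathbb{R}$ be a stochastic function value and $G(x;\xi)\in\mathbb{R}^d$ a stochastic gradient. Write $G_t:=G(x_t;\xi_t)$ and $\tilde F_t:=\sqrt{f(x_t;\xi_t)+c}$. Given $x_0\in\mathbb{R}^d$, a scalar $r_0$ and a learning rate $\eta>0$, the SG-SAV iteration defines $(x_{t+1},r_{t+1})$ for $t\ge0$ as the solution of the (linear) system $$x_{t+1}=x_t-\eta\,\frac{r_{t+1}}{\tilde F_t}\,G_t,\qquad r_{t+1}=r_t+\frac{1}{2\tilde F_t}\langle G_t,\,x_{t+1}-x_t\rangle .$$ Assumptions: (A.1) the $\xi_t$ are mutually independent and independent of $x_t$; (A.2) $\mathbb{E}_{\xi_t}[G_t]=\nabla f(x_t)$ and $\mathbb{E}_{\xi_t}[f(x_t;\xi_t)]=f(x_t)$, where $\mathbb{E}_{\xi_t}$ is expectation over $\xi_t$ conditioned on $\xi_0,\dots,\xi_{t-1}$; (A.3) there is $\sigma_0$ with $\mathbb{E}_{\xi_t}\|G(x_t;\xi_t)-\nabla f(x_t)\|^2\le\sigma_0^2$ for all $t$; (A.4) there are constants $0<a\le B$ with $a\le f(x)+c\le B$ and $a\le f(x;\xi)+c\le B$ for all $x,\xi$; (A.5) there is $\gamma$ with $\|\nabla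 f(x)\|^2\le\gamma^2$ for all $x$; (A.6) $\nabla f$ is $L$-Lipschitz. Let $F(x):=\sqrt{f(x)+c}$, $F_*:=\sqrt{f^*+c}$, and $L_F:=\frac{1}{2F_*}\Big(L+\frac{\gamma^2}{2F_*^2}\Big)$ (a Lipschitz constant of $\nabla F$). *)

theory Defs
  imports "HOL-Probability.Probability"
begin

text \<open>History sigma-algebra generated by the samples xi_0, ..., xi_(t-1).
  Conditional expectation given it is the paper's E_{xi_t}.\<close>
definition hist_alg :: "'w measure \<Rightarrow> 'b measure \<Rightarrow> (nat \<Rightarrow> 'w \<Rightarrow> 'b) \<Rightarrow> nat \<Rightarrow> 'w measure" where
  "hist_alg M S xi t =
     sigma (space M) {xi i -` A \<inter> space M | i A. i < t \<and> A \<in> sets S}"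

definition Fstar :: "('a \<Rightarrow> real) \<Rightarrow> real \<Rightarrow> real" where
  "Fstar f c = sqrt ((INF x. f x) + c)"

definition LF :: "('a \<Rightarrow> real) \<Rightarrow> real \<Rightarrow> real \<Rightarrow> real \<Rightarrow> real" where
  "LF f c L \<gamma> = (1 / (2 * Fstar f c)) * (L + \<gamma>\<^sup>2 / (2 * (Fstar f c)\<^sup>2))"

end

theory Submission
  imports Defs
begin


lemma f_lip:
  fixes f :: "'a::euclidean_space \<Rightarrow> real"
  assumes grad: "\<And>y. (f has_derivative (\<lambda>h. gradf y \<bullet> h)) (at y)"
    and A5: "\<And>y. (norm (gradf y))\<^sup>2 \<le> \<gamma>\<^sup>2"
  shows "\<bar>f y - f z\<bar> \<le> \<bar>\<gamma>\<bar> * norm (y - z)"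
proof -
  have "norm (f y - f z) \<le> \<bar>\<gamma>\<bar> * norm (y - z)"
  proof (rule differentiable_bound[where S=UNIV and f'="\<lambda>y h. gradf y \<bullet> h"])
    fix w :: 'a
    show "(f has_derivative (\<lambda>h. gradf w \<bullet> h)) (at w within UNIV)" using grad by simp
    have "onorm (\<lambda>h. gradf w \<bullet> h) \<le> norm (gradf w)"
      by (rule onorm_bound) (auto simp: Cauchy_Schwarz_ineq2)
    also have "\<dots> \<le> \<bar>\<gamma>\<bar>" using A5[of w] by (metis abs_norm_cancel power2_le_imp_le power2_abs abs_ge_zero)
    finally show "onorm (\<lambda>h. gradf w \<bullet> h) \<le> \<bar>\<gamma>\<bar>" .
  qed auto
  then show ?thesis by simp
qed

lemma Fstar_bounds:
  fixes f :: "'a \<Rightarrow> real"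
  assumes low: "\<And>y. a \<le> f y + c"
  shows "sqrt a \<le> Fstar f c" "Fstar f c \<le> sqrt (f y + c)"
proof -
  have bdd: "bdd_below (range f)" using low by (intro bdd_belowI2[where m="a - c"]) (auto simp: algebra_simps)
  have "a - c \<le> (INF x. f x)" by (rule cINF_greatest) (use low in \<open>auto simp: algebra_simps\<close>)
  then show "sqrt a \<le> Fstar f c" unfolding Fstar_def by simp
  have "(INF x. f x) \<le> f y" by (rule cINF_lower[OF bdd]) simp
  then show "Fstar f c \<le> sqrt (f y + c)" unfolding Fstar_def by simp
qed

lemma gradF_lip:
  fixes f :: "'a::euclidean_space \<Rightarrow> real"
  assumes grad: "\<And>y. (f has_derivative (\<lambda>h. gradf y \<bullet> h)) (at y)"
    and A5: "\<And>y. (norm (gradf y))\<^sup>2 \<le> \<gamma>\<^sup>2"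
    and A6: "\<And>y z. norm (gradf y - gradf z) \<le> L * norm (y - z)"
    and low: "\<And>y. a \<le> f y + c" and apos: "0 < a"
  shows "norm ((1 / (2 * sqrt (f y + c))) *\<^sub>R gradf y - (1 / (2 * sqrt (f z + c))) *\<^sub>R gradf z)
         \<le> LF f c L \<gamma> * norm (y - z)"
proof -
  define Fs where "Fs = Fstar f c"
  define Fy where "Fy = sqrt (f y + c)"
  define Fz where "Fz = sqrt (f z + c)"
  have Fs_pos: "0 < Fs" using Fstar_bounds(1)[of a f c, OF low] apos unfolding Fs_def
    by (meson less_le_trans real_sqrt_gt_0_iff)
  have Fy: "Fs \<le> Fy" "Fs \<le> Fz" unfolding Fs_def Fy_def Fz_def using Fstar_bounds(2)[of a f c, OF low] by auto
  have Fypos: "0 < Fy" "0 < Fz" using Fy Fs_pos by auto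
  have sq: "Fy^2 = f y + c" "Fz^2 = f z + c" unfolding Fy_def Fz_def using low[of y] low[of z] apos
    by simp_all
  have nd: "norm (y - z) \<ge> 0" by simp
  have gz: "norm (gradf z) \<le> \<bar>\<gamma>\<bar>" using A5[of z] by (metis abs_norm_cancel power2_le_imp_le power2_abs abs_ge_zero)
  have fl: "\<bar>f y - f z\<bar> \<le> \<bar>\<gamma>\<bar> * norm (y - z)" by (rule f_lip[OF grad A5])
  have "\<bar>Fz - Fy\<bar> = \<bar>f y - f z\<bar> / (Fy + Fz)"
  proof -
    have "(Fy - Fz) * (Fy + Fz) = f y - f z" using sq by (simp add: algebra_simps power2_eq_square)
    then have "\<bar>f y - f z\<bar> = \<bar>Fz - Fy\<bar> * (Fy + Fz)"
      using Fypos by (metis abs_minus_commute abs_mult abs_of_pos add_pos_pos)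
    then show ?thesis using Fypos by (simp add: nonzero_eq_divide_eq)
  qed
  also have "\<dots> \<le> \<bar>\<gamma>\<bar> * norm (y - z) / (2 * Fs)"
  proof (rule frac_le)
    show "0 \<le> \<bar>\<gamma>\<bar> * norm (y - z)" by simp
  qed (use fl Fy Fypos Fs_pos in auto)
  finally have dF: "\<bar>Fz - Fy\<bar> \<le> \<bar>\<gamma>\<bar> * norm (y - z) / (2 * Fs)" .
  have eq: "(1 / (2 * Fy)) *\<^sub>R gradf y - (1 / (2 * Fz)) *\<^sub>R gradf z
      = (1 / (2 * Fy)) *\<^sub>R (gradf y - gradf z) + ((Fz - Fy) / (2 * Fy * Fz)) *\<^sub>R gradf z"
  proof -
    have "(Fz - Fy) / (2 * Fy * Fz) = 1 / (2 * Fy) - 1 / (2 * Fz)" using Fypos by (simp add: field_simps)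
    then show ?thesis by (simp add: scaleR_diff_left scaleR_diff_right)
  qed
  have t1: "norm ((1 / (2 * Fy)) *\<^sub>R (gradf y - gradf z)) \<le> L * norm (y - z) / (2 * Fs)"
  proof -
    have "norm ((1 / (2 * Fy)) *\<^sub>R (gradf y - gradf z)) = norm (gradf y - gradf z) / (2 * Fy)"
      using Fypos by simp
    also have "\<dots> \<le> L * norm (y - z) / (2 * Fy)" using A6[of y z] Fypos by (simp add: divide_right_mono)
    also have "\<dots> \<le> L * norm (y - z) / (2 * Fs)"
    proof (rule divide_left_mono)
      show "0 \<le> L * norm (y - z)" using order_trans[OF norm_ge_zero A6[of y z]] .
    qed (use Fy Fs_pos in auto)
    finally show ?thesis .
  qed
  have t2: "norm (((Fz - Fy) / (2 * Fy * Fz)) *\<^sub>R gradf z) \<le> \<gamma>\<^sup>2 * norm (y - z) / (4 * Fs^3)"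
  proof -
    have "norm (((Fz - Fy) / (2 * Fy * Fz)) *\<^sub>R gradf z) = \<bar>Fz - Fy\<bar> * norm (gradf z) / (2 * Fy * Fz)"
      using Fypos by (simp add: abs_mult)
    also have "\<dots> \<le> (\<bar>\<gamma>\<bar> * norm (y - z) / (2 * Fs)) * \<bar>\<gamma>\<bar> / (2 * Fs * Fs)"
    proof (rule frac_le)
      show "0 \<le> (\<bar>\<gamma>\<bar> * norm (y - z) / (2 * Fs)) * \<bar>\<gamma>\<bar>" using Fs_pos by simp
      show "\<bar>Fz - Fy\<bar> * norm (gradf z) \<le> \<bar>\<gamma>\<bar> * norm (y - z) / (2 * Fs) * \<bar>\<gamma>\<bar>"
        using dF gz by (intro mult_mono) auto
      show "0 < 2 * Fs * Fs" using Fs_pos by simp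
      show "2 * Fs * Fs \<le> 2 * Fy * Fz" using Fy Fs_pos by (simp add: mult_mono)
    qed
    also have "\<dots> = \<gamma>\<^sup>2 * norm (y - z) / (4 * Fs^3)"
      using Fs_pos by (simp add: field_simps power2_eq_square power3_eq_cube)
    finally show ?thesis .
  qed
  have "norm ((1 / (2 * Fy)) *\<^sub>R gradf y - (1 / (2 * Fz)) *\<^sub>R gradf z)
      \<le> L * norm (y - z) / (2 * Fs) + \<gamma>\<^sup>2 * norm (y - z) / (4 * Fs^3)"
    unfolding eq by (rule order_trans[OF norm_triangle_ineq add_mono[OF t1 t2]])
  also have "\<dots> = LF f c L \<gamma> * norm (y - z)"
  proof -
    have "LF f c L \<gamma> = L / (2 * Fs) + \<gamma>\<^sup>2 / (4 * Fs^3)"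
      unfolding LF_def Fs_def[symmetric] using Fs_pos by (simp add: field_simps power2_eq_square power3_eq_cube)
    then show ?thesis by (simp add: algebra_simps)
  qed
  finally show ?thesis unfolding Fy_def Fz_def .
qed

lemma F_descent:
  fixes f :: "'a::euclidean_space \<Rightarrow> real"
  assumes grad: "\<And>y. (f has_derivative (\<lambda>h. gradf y \<bullet> h)) (at y)"
    and A5: "\<And>y. (norm (gradf y))\<^sup>2 \<le> \<gamma>\<^sup>2"
    and A6: "\<And>y z. norm (gradf y - gradf z) \<le> L * norm (y - z)"
    and low: "\<And>y. a \<le> f y + c" and apos: "0 < a"
  shows "sqrt (f y + c) \<le> sqrt (f z + c) + ((1 / (2 * sqrt (f z + c))) *\<^sub>R gradf z) \<bullet> (y - z)
           + LF f c L \<gamma> / 2 * (norm (y - z))\<^sup>2"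
proof -
  define Fn where "Fn w = sqrt (f w + c)" for w
  define dF where "dF w = (1 / (2 * Fn w)) *\<^sub>R gradf w" for w
  define d where "d = y - z"
  define p where "p s = z + s *\<^sub>R d" for s :: real
  define K where "K = LF f c L \<gamma>"
  have pos: "0 < f w + c" for w using low[of w] apos by linarith
  have hasF: "(Fn has_derivative (\<lambda>h. dF w \<bullet> h)) (at w)" for w
  proof -
    have g: "((\<lambda>w. f w + c) has_derivative (\<lambda>h. gradf w \<bullet> h)) (at w)"
      using grad[of w] by (rule has_derivative_add_const)
    have "((\<lambda>w. sqrt (f w + c)) has_derivative (\<lambda>h. (gradf w \<bullet> h) * (inverse (sqrt (f w + c)) / 2))) (at w)"
      by (rule DERIV_compose_FDERIV[OF DERIV_real_sqrt[OF pos] g])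
    then show ?thesis unfolding Fn_def dF_def
      by (rule has_derivative_eq_rhs) (auto simp: fun_eq_iff divide_simps inner_scaleR_left)
  qed
  have hasp: "(p has_derivative (\<lambda>t. t *\<^sub>R d)) (at s)" for s
    unfolding p_def by (auto intro!: derivative_eq_intros)
  have hasFp: "((\<lambda>s. Fn (p s)) has_field_derivative (dF (p s) \<bullet> d)) (at s)" for s
  proof -
    have "((\<lambda>s. Fn (p s)) has_derivative (\<lambda>t. dF (p s) \<bullet> (t *\<^sub>R d))) (at s)"
      using has_derivative_compose[OF hasp hasF] by simp
    then show ?thesis by (rule has_derivative_imp_has_field_derivative) simp
  qed
  define h where "h s = Fn (p s) - s * (dF z \<bullet> d) - K / 2 * s\<^sup>2 * (norm d)\<^sup>2" for s
  have hder: "DERIV h s :> (dF (p s) \<bullet> d - dF z \<bullet> d - K * s * (norm d)\<^sup>2)" for s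
    unfolding h_def by (rule derivative_eq_intros hasFp refl | simp)+
  have "h 1 \<le> h 0"
  proof (rule DERIV_nonpos_imp_nonincreasing[of 0 1 h])
    fix s :: real assume s: "0 \<le> s" "s \<le> 1"
    have "dF (p s) \<bullet> d - dF z \<bullet> d = (dF (p s) - dF z) \<bullet> d" by (simp add: inner_diff_left)
    also have "\<dots> \<le> norm (dF (p s) - dF z) * norm d" by (rule Cauchy_Schwarz_ineq2[THEN order_trans[OF abs_ge_self]])
    also have "\<dots> \<le> (K * norm (p s - z)) * norm d"
      using gradF_lip[OF grad A5 A6 low apos, of "p s" z] unfolding dF_def Fn_def K_def
      by (intro mult_right_mono) auto
    also have "\<dots> = K * s * (norm d)\<^sup>2" using s unfolding p_def by (simp add: power2_eq_square)
    finally have "dF (p s) \<bullet> d - dF z \<bullet> d - K * s * (norm d)\<^sup>2 \<le> 0" by simp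
    then show "\<exists>y. DERIV h s :> y \<and> y \<le> 0" using hder[of s] by blast
  qed simp
  then show ?thesis unfolding h_def p_def d_def K_def dF_def Fn_def by simp
qed



lemma step_alg:
  fixes g x x' :: "'a::real_inner" and r r' F \<eta> :: real
  assumes Fpos: "0 < F" and eta: "0 < \<eta>"
    and xs: "x' = x - (\<eta> * r' / F) *\<^sub>R g"
    and rs: "r' = r + (1 / (2 * F)) * (g \<bullet> (x' - x))"
  shows "r' = r / (1 + \<eta> * (norm g)\<^sup>2 / (2 * F\<^sup>2))"
    and "(norm (x' - x))\<^sup>2 = 2 * \<eta> * r' * (r - r')"
    and "(norm (x' - x))\<^sup>2 \<le> \<eta> * (r\<^sup>2 - r'\<^sup>2)"
proof -
  have dx: "x' - x = - ((\<eta> * r' / F) *\<^sub>R g)" using xs by simp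
  have gi: "g \<bullet> (x' - x) = - (\<eta> * r' / F) * (norm g)\<^sup>2"
    unfolding dx by (simp add: power2_norm_eq_inner)
  have rr: "r - r' = \<eta> * r' * (norm g)\<^sup>2 / (2 * F\<^sup>2)"
    using rs unfolding gi using Fpos by (simp add: field_simps power2_eq_square)
  have "r' * (1 + \<eta> * (norm g)\<^sup>2 / (2 * F\<^sup>2)) = r" using rr by (simp add: algebra_simps)
  moreover have "1 + \<eta> * (norm g)\<^sup>2 / (2 * F\<^sup>2) > 0" using eta Fpos by (simp add: add_pos_nonneg)
  ultimately show "r' = r / (1 + \<eta> * (norm g)\<^sup>2 / (2 * F\<^sup>2))" by (simp add: field_simps)
  have "(norm (x' - x))\<^sup>2 = (\<eta> * r' / F)\<^sup>2 * (norm g)\<^sup>2" unfolding dx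
    by (simp only: norm_minus_cancel norm_scaleR power_mult_distrib power2_abs)
  also have "\<dots> = 2 * \<eta> * r' * (r - r')" unfolding rr using Fpos by (simp add: field_simps power2_eq_square)
  finally show n2: "(norm (x' - x))\<^sup>2 = 2 * \<eta> * r' * (r - r')" .
  have "2 * r' * (r - r') \<le> r\<^sup>2 - r'\<^sup>2"
    using sum_squares_ge_zero[of "r - r'" 0] by (simp add: power2_eq_square algebra_simps)
  then show "(norm (x' - x))\<^sup>2 \<le> \<eta> * (r\<^sup>2 - r'\<^sup>2)" unfolding n2 using eta
    by (metis mult.assoc mult_left_mono less_imp_le mult.commute)
qed

lemma e_bound:
  fixes g gr :: "'a::real_inner" and fv fsv a c \<gamma> :: real
  assumes apos: "0 < a" and l1: "a \<le> fv + c" and l2: "a \<le> fsv + c"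
    and gr: "(norm gr)\<^sup>2 \<le> \<gamma>\<^sup>2"
  shows "(norm ((1 / (2 * sqrt (fv + c))) *\<^sub>R gr - (1 / (2 * sqrt (fsv + c))) *\<^sub>R g))\<^sup>2
     \<le> (norm (g - gr))\<^sup>2 / (2 * a) + \<gamma>\<^sup>2 * \<bar>fsv - fv\<bar>\<^sup>2 / (8 * a ^ 3)"
proof -
  define F where "F = sqrt (fv + c)"
  define Ft where "Ft = sqrt (fsv + c)"
  define sa where "sa = sqrt a"
  have sapos: "0 < sa" using apos unfolding sa_def by simp
  have sa2: "sa\<^sup>2 = a" using apos unfolding sa_def by simp
  have FF: "sa \<le> F" "sa \<le> Ft" unfolding F_def Ft_def sa_def using l1 l2 by auto
  have Fpos: "0 < F" "0 < Ft" using FF sapos by auto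
  have sq: "F\<^sup>2 = fv + c" "Ft\<^sup>2 = fsv + c" unfolding F_def Ft_def using l1 l2 apos by auto
  have eq: "(1 / (2 * F)) *\<^sub>R gr - (1 / (2 * Ft)) *\<^sub>R g
     = (1 / (2 * Ft)) *\<^sub>R (gr - g) + ((Ft - F) / (2 * F * Ft)) *\<^sub>R gr"
  proof -
    have "(Ft - F) / (2 * F * Ft) = 1 / (2 * F) - 1 / (2 * Ft)" using Fpos by (simp add: field_simps)
    then show ?thesis by (simp add: scaleR_diff_left scaleR_diff_right)
  qed
  define u where "u = norm (g - gr) / (2 * sa)"
  define v where "v = \<bar>\<gamma>\<bar> * \<bar>fsv - fv\<bar> / (4 * sa ^ 3)"
  have u: "norm ((1 / (2 * Ft)) *\<^sub>R (gr - g)) \<le> u"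
  proof -
    have "norm ((1 / (2 * Ft)) *\<^sub>R (gr - g)) = norm (g - gr) / (2 * Ft)"
      using Fpos by (simp add: norm_minus_commute)
    also have "\<dots> \<le> u" unfolding u_def using FF sapos by (intro divide_left_mono) auto
    finally show ?thesis .
  qed
  have dd: "\<bar>Ft - F\<bar> * (Ft + F) = \<bar>fsv - fv\<bar>"
  proof -
    have "(Ft - F) * (Ft + F) = fsv - fv" using sq by (simp add: algebra_simps power2_eq_square)
    then show ?thesis using Fpos by (metis abs_mult abs_of_pos add_pos_pos)
  qed
  have gz: "norm gr \<le> \<bar>\<gamma>\<bar>" using gr by (metis power2_le_imp_le power2_abs abs_ge_zero)
  have v: "norm (((Ft - F) / (2 * F * Ft)) *\<^sub>R gr) \<le> v"
  proof -
    have "norm (((Ft - F) / (2 * F * Ft)) *\<^sub>R gr) = \<bar>fsv - fv\<bar> * norm gr / (2 * F * Ft * (Ft + F))"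
    proof -
      have a1: "\<bar>Ft - F\<bar> = \<bar>fsv - fv\<bar> / (Ft + F)" using dd Fpos by (simp add: eq_divide_eq)
      have "norm (((Ft - F) / (2 * F * Ft)) *\<^sub>R gr) = \<bar>Ft - F\<bar> * norm gr / (2 * F * Ft)"
        using Fpos by (simp add: abs_mult)
      also have "\<dots> = \<bar>fsv - fv\<bar> / (Ft + F) * norm gr / (2 * F * Ft)" by (simp only: a1)
      also have "\<dots> = \<bar>fsv - fv\<bar> * norm gr / (2 * F * Ft * (Ft + F))" using Fpos by (simp add: field_simps)
      finally show ?thesis .
    qed
    also have "\<dots> \<le> \<bar>fsv - fv\<bar> * \<bar>\<gamma>\<bar> / (2 * sa * sa * (sa + sa))"
    proof (rule frac_le)
      show "0 \<le> \<bar>fsv - fv\<bar> * \<bar>\<gamma>\<bar>" by simp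
      show "\<bar>fsv - fv\<bar> * norm gr \<le> \<bar>fsv - fv\<bar> * \<bar>\<gamma>\<bar>" using gz by (simp add: mult_left_mono)
      show "0 < 2 * sa * sa * (sa + sa)" using sapos by simp
      show "2 * sa * sa * (sa + sa) \<le> 2 * F * Ft * (Ft + F)"
        using FF sapos by (intro mult_mono add_mono) auto
    qed
    also have "\<dots> = v" unfolding v_def by (simp add: power3_eq_cube field_simps)
    finally show ?thesis .
  qed
  have "norm ((1 / (2 * F)) *\<^sub>R gr - (1 / (2 * Ft)) *\<^sub>R g) \<le> u + v"
    unfolding eq by (rule order_trans[OF norm_triangle_ineq add_mono[OF u v]])
  then have "(norm ((1 / (2 * F)) *\<^sub>R gr - (1 / (2 * Ft)) *\<^sub>R g))\<^sup>2 \<le> (u + v)\<^sup>2"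
    by (intro power_mono) auto
  also have "\<dots> \<le> 2 * u\<^sup>2 + 2 * v\<^sup>2" using sum_squares_ge_zero[of "u - v" 0]
    by (simp add: power2_eq_square algebra_simps)
  also have "\<dots> = (norm (g - gr))\<^sup>2 / (2 * a) + \<gamma>\<^sup>2 * \<bar>fsv - fv\<bar>\<^sup>2 / (8 * a ^ 3)"
    unfolding u_def v_def sa2[symmetric] using sapos
    by (simp add: power_mult_distrib power_divide field_simps power2_abs)
  finally show ?thesis unfolding F_def Ft_def .
qed



lemma comp_meas:
  assumes g: "(\<lambda>(y, s). g y s) \<in> borel_measurable (borel \<Otimes>\<^sub>M S)"
    and X: "X \<in> borel_measurable M" and Y: "Y \<in> measurable M S"
  shows "(\<lambda>\<omega>. g (X \<omega>) (Y \<omega>)) \<in> borel_measurable M"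
  using measurable_compose[OF measurable_Pair[OF X Y] g] by simp

lemma hist_sigma_finite:
  assumes prob: "prob_space M" and xi: "\<And>i. \<xi> i \<in> measurable M S"
  shows "sigma_finite_subalgebra M (hist_alg M S \<xi> t)"
proof -
  let ?A = "{\<xi> i -` A \<inter> space M | i A. i < t \<and> A \<in> sets S}"
  have A: "?A \<subseteq> Pow (space M)" by auto
  have A2: "?A \<subseteq> sets M" using xi by (auto intro: measurable_sets)
  have sub: "subalgebra M (hist_alg M S \<xi> t)"
    unfolding hist_alg_def subalgebra_def
    using sets.sigma_sets_subset[OF A2] A by (simp add: sets_measure_of)
  interpret prob_space M by (rule prob)
  have "finite_measure_subalgebra M (hist_alg M S \<xi> t)"
    by unfold_locales (rule sub)
  then show ?thesis by (rule finite_measure_subalgebra_is_sigma_finite)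
qed

lemma cond_exp_bound:
  assumes prob: "prob_space M" and sf: "sigma_finite_subalgebra M F"
    and int: "integrable M h" and ae: "AE \<omega> in M. real_cond_exp M F h \<omega> \<le> s"
  shows "(\<integral>\<omega>. h \<omega> \<partial>M) \<le> s"
proof -
  interpret prob_space M by (rule prob)
  interpret sigma_finite_subalgebra M F by (rule sf)
  have "(\<integral>\<omega>. h \<omega> \<partial>M) = (\<integral>\<omega>. real_cond_exp M F h \<omega> \<partial>M)"
    using real_cond_exp_int(2)[OF int] by simp
  also have "\<dots> \<le> (\<integral>\<omega>. s \<partial>M)"
    using real_cond_exp_int(1)[OF int] ae by (intro integral_mono_AE) auto
  also have "\<dots> = s" using prob_space.prob_space[OF prob] by simp
  finally show ?thesis .
qed

lemma young_opt:
  fixes X A p q :: real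
  assumes p: "0 \<le> p" and q: "0 \<le> q"
    and H: "\<And>l. 0 < l \<Longrightarrow> A - l * p - q / l \<le> X"
  shows "A - 2 * sqrt (p * q) \<le> X"
proof (rule field_le_epsilon)
  fix e :: real assume e: "0 < e"
  define sp where "sp = sqrt p"
  define sq where "sq = sqrt q"
  have sp: "0 \<le> sp" "sp\<^sup>2 = p" unfolding sp_def using p by auto
  have sq: "0 \<le> sq" "sq\<^sup>2 = q" unfolding sq_def using q by auto
  define d where "d = e / (sp + sq + 1)"
  have d: "0 < d" unfolding d_def using e sp sq by auto
  have de: "d * (sp + sq) \<le> e"
  proof -
    have "d * (sp + sq) \<le> d * (sp + sq + 1)" using d by simp
    also have "\<dots> = e" unfolding d_def using sp sq by simp
    finally show ?thesis .
  qed
  define l where "l = (sq + d) / (sp + d)"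
  have l: "0 < l" unfolding l_def using d sp sq by auto
  have t1: "l * p \<le> (sq + d) * sp"
  proof -
    have "p / (sp + d) \<le> sp" using sp d by (simp add: divide_le_eq power2_eq_square algebra_simps mult_nonneg_nonneg)
    then have "(sq + d) * (p / (sp + d)) \<le> (sq + d) * sp" using sq d by (intro mult_left_mono) auto
    then show ?thesis unfolding l_def by simp
  qed
  have t2: "q / l \<le> sq * (sp + d)"
  proof -
    have "q / (sq + d) \<le> sq" using sq d by (simp add: divide_le_eq power2_eq_square algebra_simps mult_nonneg_nonneg)
    then have "(sp + d) * (q / (sq + d)) \<le> (sp + d) * sq" using sp d by (intro mult_left_mono) auto
    then show ?thesis unfolding l_def using d sp sq by (simp add: field_simps)
  qed
  have "sqrt (p * q) = sp * sq" unfolding sp_def sq_def by (simp add: real_sqrt_mult)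
  then have "A - 2 * sqrt (p * q) \<le> A - l * p - q / l + d * (sp + sq)"
    using t1 t2 by (simp add: algebra_simps)
  also have "\<dots> \<le> X + e" using H[OF l] de by linarith
  finally show "A - 2 * sqrt (p * q) \<le> X + e" .
qed



lemma young:
  fixes u v l :: real assumes "0 < l"
  shows "u * v \<le> u\<^sup>2 / (2 * l) + l * v\<^sup>2 / 2"
proof -
  have "0 \<le> (u - l * v)\<^sup>2 / (2 * l)" using assms by simp
  also have "\<dots> = u\<^sup>2 / (2 * l) + l * v\<^sup>2 / 2 - u * v" using assms
    by (simp add: power2_eq_square field_simps)
  finally show ?thesis by simp
qed

theorem theorem4p3:
  fixes M :: "'w measure" and S :: "'b measure"
    and f :: "'a::euclidean_space \<Rightarrow> real" and gradf :: "'a \<Rightarrow> 'a"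
    and fs :: "'a \<Rightarrow> 'b \<Rightarrow> real" and G :: "'a \<Rightarrow> 'b \<Rightarrow> 'a"
    and \<xi> :: "nat \<Rightarrow> 'w \<Rightarrow> 'b"
    and x :: "nat \<Rightarrow> 'w \<Rightarrow> 'a" and r :: "nat \<Rightarrow> 'w \<Rightarrow> real"
    and x0 :: 'a and c a B \<sigma>\<^sub>0 \<sigma>\<^sub>f \<gamma> L \<eta> :: real and T :: nat
  assumes prob: "prob_space M"
    (* f continuously differentiable with gradient gradf *)
    and grad: "\<And>y. (f has_derivative (\<lambda>h. gradf y \<bullet> h)) (at y)"
    and grad_cont: "continuous_on UNIV gradf"
    and c_nonneg: "c \<ge> 0"
    and fstar: "(INF y. f y) > - c"
    (* measurability of the stochastic oracles and samples *)
    and xi_meas: "\<And>t. \<xi> t \<in> measurable M S"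
    and fs_meas: "(\<lambda>(y, s). fs y s) \<in> borel_measurable (borel \<Otimes>\<^sub>M S)"
    and G_meas: "(\<lambda>(y, s). G y s) \<in> borel_measurable (borel \<Otimes>\<^sub>M S)"
    (* SG-SAV iteration *)
    and x_init: "\<And>\<omega>. \<omega> \<in> space M \<Longrightarrow> x 0 \<omega> = x0"
    and r_init: "\<And>\<omega>. \<omega> \<in> space M \<Longrightarrow> r 0 \<omega> = sqrt (f x0 + c)"
    and x_step: "\<And>t \<omega>. \<omega> \<in> space M \<Longrightarrow>
        x (Suc t) \<omega> = x t \<omega> - (\<eta> * r (Suc t) \<omega> / sqrt (fs (x t \<omega>) (\<xi> t \<omega>) + c)) *\<^sub>R G (x t \<omega>) (\<xi> t \<omega>)"
    and r_step: "\<And>t \<omega>. \<omega> \<in> space M \<Longrightarrow>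
        r (Suc t) \<omega> = r t \<omega> + (1 / (2 * sqrt (fs (x t \<omega>) (\<xi> t \<omega>) + c))) *
                         (G (x t \<omega>) (\<xi> t \<omega>) \<bullet> (x (Suc t) \<omega> - x t \<omega>))"
    (* (A.1) *)
    and A1: "prob_space.indep_vars M (\<lambda>_. S) \<xi> UNIV"
    (* (A.2) *)
    and A2_G: "\<And>t b. b \<in> Basis \<Longrightarrow> AE \<omega> in M.
        real_cond_exp M (hist_alg M S \<xi> t) (\<lambda>\<omega>. G (x t \<omega>) (\<xi> t \<omega>) \<bullet> b) \<omega> = gradf (x t \<omega>) \<bullet> b"
    and A2_f: "\<And>t. AE \<omega> in M.
        real_cond_exp M (hist_alg M S \<xi> t) (\<lambda>\<omega>. fs (x t \<omega>) (\<xi> t \<omega>)) \<omega> = f (x t \<omega>)"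
    (* (A.3) *)
    and A3_int: "\<And>t. integrable M (\<lambda>\<omega>. (norm (G (x t \<omega>) (\<xi> t \<omega>) - gradf (x t \<omega>)))\<^sup>2)"
    and A3: "\<And>t. AE \<omega> in M.
        real_cond_exp M (hist_alg M S \<xi> t) (\<lambda>\<omega>. (norm (G (x t \<omega>) (\<xi> t \<omega>) - gradf (x t \<omega>)))\<^sup>2) \<omega> \<le> \<sigma>\<^sub>0\<^sup>2"
    (* (A.4) *)
    and a_pos: "0 < a" and a_le_B: "a \<le> B"
    and A4_f: "\<And>y. a \<le> f y + c \<and> f y + c \<le> B"
    and A4_fs: "\<And>y s. a \<le> fs y s + c \<and> fs y s + c \<le> B"
    (* (A.5) *)
    and A5: "\<And>y. (norm (gradf y))\<^sup>2 \<le> \<gamma>\<^sup>2"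
    (* (A.6) *)
    and A6: "\<And>y z. norm (gradf y - gradf z) \<le> L * norm (y - z)"
    (* bounded variance of stochastic function values *)
    and sigf_nonneg: "0 \<le> \<sigma>\<^sub>f"
    and var_f: "\<And>t. AE \<omega> in M.
        real_cond_exp M (hist_alg M S \<xi> t) (\<lambda>\<omega>. \<bar>fs (x t \<omega>) (\<xi> t \<omega>) - f (x t \<omega>)\<bar>\<^sup>2) \<omega> \<le> \<sigma>\<^sub>f\<^sup>2"
    and T_ge: "T \<ge> 1"
    and eta_pos: "\<eta> > 0"
    and lr: "sqrt (f x0 + c) * sqrt (real T * (\<gamma>\<^sup>2 / (8 * a ^ 3) * \<sigma>\<^sub>f\<^sup>2 + 1 / (2 * a) * \<sigma>\<^sub>0\<^sup>2)) * sqrt \<eta>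
             + LF f c L \<gamma> * (sqrt (f x0 + c))\<^sup>2 / 2 * \<eta>
             + (\<sigma>\<^sub>f / (2 * sqrt a) - sqrt a / 2) \<le> 0"
  shows "prob_space.expectation M (r T) \<ge> sqrt a / 2 \<and> sqrt a / 2 > 0"
proof -
  interpret prob_space M by (rule prob)
  define Fn where "Fn y = sqrt (f y + c)" for y
  define Ft where "Ft t \<omega> = sqrt (fs (x t \<omega>) (\<xi> t \<omega>) + c)" for t \<omega>
  define Gt where "Gt t \<omega> = G (x t \<omega>) (\<xi> t \<omega>)" for t \<omega>
  define D where "D t \<omega> = (norm (G (x t \<omega>) (\<xi> t \<omega>) - gradf (x t \<omega>)))\<^sup>2" for t \<omega>
  define V where "V t \<omega> = \<bar>fs (x t \<omega>) (\<xi> t \<omega>) - f (x t \<omega>)\<bar>\<^sup>2" for t \<omega>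
  define W where "W t \<omega> = D t \<omega> / (2 * a) + \<gamma>\<^sup>2 * V t \<omega> / (8 * a ^ 3)" for t \<omega>
  define K where "K = LF f c L \<gamma>"
  define r0 where "r0 = sqrt (f x0 + c)"
  define Kc where "Kc = \<gamma>\<^sup>2 / (8 * a ^ 3) * \<sigma>\<^sub>f\<^sup>2 + 1 / (2 * a) * \<sigma>\<^sub>0\<^sup>2"
  have low: "\<And>y. a \<le> f y + c" using A4_f by blast
  have Ftpos: "0 < Ft t \<omega>" for t \<omega> unfolding Ft_def using A4_fs[of "x t \<omega>" "\<xi> t \<omega>"] a_pos by auto
  have r0pos: "0 < r0" unfolding r0_def using low[of x0] a_pos by auto
  obtain b :: 'a where b: "b \<in> Basis" using nonempty_Basis by blast
  have L0: "0 \<le> L" using order_trans[OF norm_ge_zero A6[of b 0]] b by simp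
  have Fs: "0 < Fstar f c" using Fstar_bounds(1)[of a f c, OF low] a_pos
    by (meson less_le_trans real_sqrt_gt_0_iff)
  have K0: "0 \<le> K" unfolding K_def LF_def using Fs L0 by simp
  have stp: "r (Suc t) \<omega> = r t \<omega> / (1 + \<eta> * (norm (Gt t \<omega>))\<^sup>2 / (2 * (Ft t \<omega>)\<^sup>2))"
     "(norm (x (Suc t) \<omega> - x t \<omega>))\<^sup>2 \<le> \<eta> * ((r t \<omega>)\<^sup>2 - (r (Suc t) \<omega>)\<^sup>2)"
    if "\<omega> \<in> space M" for t \<omega>
    using step_alg[OF Ftpos eta_pos x_step[OF that, of t, folded Ft_def Gt_def] r_step[OF that, of t, folded Ft_def Gt_def]]
    by auto
  have rb: "0 \<le> r t \<omega> \<and> r t \<omega> \<le> r0" if "\<omega> \<in> space M" for t \<omega>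
  proof (induction t)
    case 0 then show ?case using r_init[OF that] r0pos unfolding r0_def by simp
  next
    case (Suc t)
    define q where "q = 1 + \<eta> * (norm (Gt t \<omega>))\<^sup>2 / (2 * (Ft t \<omega>)\<^sup>2)"
    have q: "1 \<le> q" unfolding q_def using eta_pos by simp
    have e: "r (Suc t) \<omega> = r t \<omega> / q" using stp(1)[OF that] unfolding q_def .
    have "r t \<omega> / q \<le> r t \<omega>" using Suc q by (simp add: divide_le_eq mult_le_cancel_left1 order_trans[OF _ mult_left_mono[OF q]])
    then show ?case using Suc q e by auto
  qed
  have f_meas: "f \<in> borel_measurable borel"
    by (intro borel_measurable_continuous_onI continuous_at_imp_continuous_on ballI has_derivative_continuous[OF grad])
  have meas: "x t \<in> borel_measurable M \<and> r t \<in> borel_measurable M" for t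
  proof (induction t)
    case 0
    have "x 0 \<in> borel_measurable M" using measurable_cong[of M "x 0" "\<lambda>_. x0"] x_init by simp
    moreover have "r 0 \<in> borel_measurable M" using measurable_cong[of M "r 0" "\<lambda>_. sqrt (f x0 + c)"] r_init by simp
    ultimately show ?case ..
  next
    case (Suc t)
    then have xm[measurable]: "x t \<in> borel_measurable M" and rm[measurable]: "r t \<in> borel_measurable M" by auto
    have Gm[measurable]: "Gt t \<in> borel_measurable M" unfolding Gt_def by (rule comp_meas[OF G_meas xm xi_meas])
    have fsm[measurable]: "(\<lambda>\<omega>. fs (x t \<omega>) (\<xi> t \<omega>)) \<in> borel_measurable M" by (rule comp_meas[OF fs_meas xm xi_meas])
    have Fm[measurable]: "Ft t \<in> borel_measurable M" unfolding Ft_def by measurable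
    have r1: "r (Suc t) \<in> borel_measurable M"
    proof -
      have "(\<lambda>\<omega>. r t \<omega> / (1 + \<eta> * (norm (Gt t \<omega>))\<^sup>2 / (2 * (Ft t \<omega>)\<^sup>2))) \<in> borel_measurable M" by measurable
      then show ?thesis using measurable_cong[of M "r (Suc t)"] stp(1) by (metis (no_types, lifting))
    qed
    note r1[measurable]
    have "(\<lambda>\<omega>. x t \<omega> - (\<eta> * r (Suc t) \<omega> / Ft t \<omega>) *\<^sub>R Gt t \<omega>) \<in> borel_measurable M" by measurable
    then have "x (Suc t) \<in> borel_measurable M"
      using measurable_cong[of M "x (Suc t)"] x_step unfolding Ft_def Gt_def by (metis (no_types, lifting))
    then show ?case using r1 by blast
  qed
  have xm[measurable]: "x t \<in> borel_measurable M" and rm[measurable]: "r t \<in> borel_measurable M" for t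
    using meas by auto
  have main: "Fn (x n \<omega>) - r n \<omega> \<le> (l + K) / 2 * \<eta> * (r0\<^sup>2 - (r n \<omega>)\<^sup>2) + (\<Sum>t<n. W t \<omega>) / (2 * l)"
    if om: "\<omega> \<in> space M" and l: "0 < l" for n \<omega> l
  proof (induction n)
    case 0 then show ?case using x_init[OF om] r_init[OF om] unfolding Fn_def r0_def by simp
  next
    case (Suc n)
    define xn where "xn = x n \<omega>"
    define xs where "xs = x (Suc n) \<omega>"
    define dx where "dx = xs - xn"
    define rn where "rn = r n \<omega>"
    define rs where "rs = r (Suc n) \<omega>"
    define e where "e = (1 / (2 * Fn xn)) *\<^sub>R gradf xn - (1 / (2 * Ft n \<omega>)) *\<^sub>R Gt n \<omega>"
    have desc: "Fn xs \<le> Fn xn + ((1 / (2 * Fn xn)) *\<^sub>R gradf xn) \<bullet> dx + K / 2 * (norm dx)\<^sup>2"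
      using F_descent[OF grad A5 A6 low a_pos, of xs xn] unfolding Fn_def K_def dx_def .
    have rdiff: "rs - rn = (1 / (2 * Ft n \<omega>)) * (Gt n \<omega> \<bullet> dx)"
      using r_step[OF om, of n] unfolding rs_def rn_def dx_def xs_def xn_def Ft_def Gt_def by simp
    have einner: "((1 / (2 * Fn xn)) *\<^sub>R gradf xn) \<bullet> dx - (1 / (2 * Ft n \<omega>)) * (Gt n \<omega> \<bullet> dx) = e \<bullet> dx"
      unfolding e_def by (simp add: inner_diff_left)
    have s1: "Fn xs - rs \<le> Fn xn - rn + e \<bullet> dx + K / 2 * (norm dx)\<^sup>2"
      using desc rdiff einner by linarith
    have eW: "(norm e)\<^sup>2 \<le> W n \<omega>"
      using e_bound[OF a_pos low[of xn], of "fs xn (\<xi> n \<omega>)" "gradf xn" \<gamma> "Gt n \<omega>"] A4_fs[of xn "\<xi> n \<omega>"] A5[of xn]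
      unfolding e_def W_def D_def V_def Fn_def Ft_def Gt_def xn_def by simp
    have "e \<bullet> dx \<le> norm e * norm dx" by (rule order_trans[OF abs_ge_self Cauchy_Schwarz_ineq2])
    also have "\<dots> \<le> (norm e)\<^sup>2 / (2 * l) + l * (norm dx)\<^sup>2 / 2" by (rule young[OF l])
    also have "\<dots> \<le> W n \<omega> / (2 * l) + l * (norm dx)\<^sup>2 / 2" using eW l by (simp add: divide_right_mono)
    finally have s2: "e \<bullet> dx \<le> W n \<omega> / (2 * l) + l * (norm dx)\<^sup>2 / 2" .
    have s3: "(l + K) / 2 * (norm dx)\<^sup>2 \<le> (l + K) / 2 * (\<eta> * (rn\<^sup>2 - rs\<^sup>2))"
      using stp(2)[OF om, of n] l K0 unfolding dx_def xs_def xn_def rn_def rs_def by (intro mult_left_mono) auto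
    have eq1: "K / 2 * (norm dx)\<^sup>2 + l * (norm dx)\<^sup>2 / 2 = (l + K) / 2 * (norm dx)\<^sup>2" by (simp add: algebra_simps)
    have eq2: "(l + K) / 2 * \<eta> * (r0\<^sup>2 - rs\<^sup>2) = (l + K) / 2 * \<eta> * (r0\<^sup>2 - rn\<^sup>2) + (l + K) / 2 * (\<eta> * (rn\<^sup>2 - rs\<^sup>2))"
      by (simp add: field_simps)
    have eq3: "(\<Sum>t<Suc n. W t \<omega>) / (2 * l) = (\<Sum>t<n. W t \<omega>) / (2 * l) + W n \<omega> / (2 * l)"
      by (simp add: add_divide_distrib)
    have IH: "Fn xn - rn \<le> (l + K) / 2 * \<eta> * (r0\<^sup>2 - rn\<^sup>2) + (\<Sum>t<n. W t \<omega>) / (2 * l)"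
      using Suc unfolding xn_def rn_def .
    show ?case unfolding xs_def[symmetric] rs_def[symmetric] eq2 eq3
      using IH s1 s2 s3 eq1 by linarith
  qed
  have ptw: "sqrt a - (l + K) / 2 * \<eta> * r0\<^sup>2 - (\<Sum>t<T. W t \<omega>) / (2 * l) \<le> r T \<omega>"
    if om: "\<omega> \<in> space M" and l: "0 < l" for \<omega> l
  proof -
    have "(l + K) / 2 * \<eta> * (r0\<^sup>2 - (r T \<omega>)\<^sup>2) \<le> (l + K) / 2 * \<eta> * r0\<^sup>2"
      using l K0 eta_pos by (intro mult_left_mono) auto
    moreover have "sqrt a \<le> Fn (x T \<omega>)" unfolding Fn_def using low by simp
    ultimately show ?thesis using main[OF om l, of T] by linarith
  qed
  have intr: "integrable M (r T)"
    by (rule integrable_const_bound[where B=r0]) (use rb in \<open>auto intro!: AE_I2\<close>)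
  have intD: "integrable M (D t)" for t unfolding D_def by (rule A3_int)
  have intV: "integrable M (V t)" for t
  proof (rule integrable_const_bound[where B="(B - a)\<^sup>2"])
    have fm: "(\<lambda>\<omega>. f (x t \<omega>)) \<in> borel_measurable M" using measurable_compose[OF xm f_meas] .
    have fsm: "(\<lambda>\<omega>. fs (x t \<omega>) (\<xi> t \<omega>)) \<in> borel_measurable M" by (rule comp_meas[OF fs_meas xm xi_meas])
    show "V t \<in> borel_measurable M" unfolding V_def using fm fsm by measurable
    show "AE \<omega> in M. norm (V t \<omega>) \<le> (B - a)\<^sup>2"
    proof (rule AE_I2)
      fix \<omega>
      have "\<bar>fs (x t \<omega>) (\<xi> t \<omega>) - f (x t \<omega>)\<bar> \<le> B - a"
        using A4_fs[of "x t \<omega>" "\<xi> t \<omega>"] A4_f[of "x t \<omega>"] by linarith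
      then have "\<bar>fs (x t \<omega>) (\<xi> t \<omega>) - f (x t \<omega>)\<bar>\<^sup>2 \<le> (B - a)\<^sup>2" by (intro power_mono) auto
      then show "norm (V t \<omega>) \<le> (B - a)\<^sup>2" unfolding V_def by simp
    qed
  qed
  have intW: "integrable M (W t)" for t
    unfolding W_def using intD[of t] intV[of t] by auto
  have sf: "sigma_finite_subalgebra M (hist_alg M S \<xi> t)" for t by (rule hist_sigma_finite[OF prob xi_meas])
  have ED: "(\<integral>\<omega>. D t \<omega> \<partial>M) \<le> \<sigma>\<^sub>0\<^sup>2" for t
    by (rule cond_exp_bound[OF prob sf[of t] intD]) (use A3[of t] in \<open>simp add: D_def[abs_def]\<close>)
  have EV: "(\<integral>\<omega>. V t \<omega> \<partial>M) \<le> \<sigma>\<^sub>f\<^sup>2" for t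
    by (rule cond_exp_bound[OF prob sf[of t] intV]) (use var_f[of t] in \<open>simp add: V_def[abs_def]\<close>)
  have EW: "(\<integral>\<omega>. W t \<omega> \<partial>M) \<le> Kc" for t
  proof -
    have "(\<integral>\<omega>. W t \<omega> \<partial>M) = (\<integral>\<omega>. D t \<omega> \<partial>M) / (2 * a) + \<gamma>\<^sup>2 * (\<integral>\<omega>. V t \<omega> \<partial>M) / (8 * a ^ 3)"
      unfolding W_def using intD[of t] intV[of t] by (simp add: integral_add)
    also have "\<dots> \<le> \<sigma>\<^sub>0\<^sup>2 / (2 * a) + \<gamma>\<^sup>2 * \<sigma>\<^sub>f\<^sup>2 / (8 * a ^ 3)"
      using ED[of t] EV[of t] a_pos by (intro add_mono divide_right_mono mult_left_mono) auto
    also have "\<dots> = Kc" unfolding Kc_def by simp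
    finally show ?thesis .
  qed
  have Kc0: "0 \<le> Kc" unfolding Kc_def using a_pos by simp
  define A where "A = sqrt a - K / 2 * \<eta> * r0\<^sup>2"
  define p where "p = \<eta> * r0\<^sup>2 / 2"
  define q where "q = real T * Kc / 2"
  have E_l: "A - l * p - q / l \<le> expectation (r T)" if l: "0 < l" for l
  proof -
    define LB where "LB \<omega> = (sqrt a - (l + K) / 2 * \<eta> * r0\<^sup>2) - (\<Sum>t<T. W t \<omega>) / (2 * l)" for \<omega>
    have intS: "integrable M (\<lambda>\<omega>. \<Sum>t<T. W t \<omega>)" by (rule Bochner_Integration.integrable_sum) (rule intW)
    have intLB: "integrable M LB" unfolding LB_def
      by (rule Bochner_Integration.integrable_diff[OF integrable_const integrable_divide_zero[OF intS]])
    have "(\<integral>\<omega>. LB \<omega> \<partial>M) = (sqrt a - (l + K) / 2 * \<eta> * r0\<^sup>2) - (\<Sum>t<T. (\<integral>\<omega>. W t \<omega> \<partial>M)) / (2 * l)"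
      unfolding LB_def using intW prob_space.prob_space[OF prob]
      by (simp add: Bochner_Integration.integral_diff Bochner_Integration.integral_sum intS)
    also have "\<dots> \<ge> (sqrt a - (l + K) / 2 * \<eta> * r0\<^sup>2) - (real T * Kc) / (2 * l)"
    proof -
      have "(\<Sum>t<T. (\<integral>\<omega>. W t \<omega> \<partial>M)) \<le> (\<Sum>t<T. Kc)" by (rule sum_mono) (rule EW)
      then have "(\<Sum>t<T. (\<integral>\<omega>. W t \<omega> \<partial>M)) \<le> real T * Kc" by simp
      then show ?thesis using l by (simp add: divide_right_mono)
    qed
    finally have "(sqrt a - (l + K) / 2 * \<eta> * r0\<^sup>2) - (real T * Kc) / (2 * l) \<le> (\<integral>\<omega>. LB \<omega> \<partial>M)" .
    also have "\<dots> \<le> expectation (r T)"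
      by (rule integral_mono[OF intLB intr]) (use ptw l in \<open>auto simp: LB_def\<close>)
    also have "(sqrt a - (l + K) / 2 * \<eta> * r0\<^sup>2) - (real T * Kc) / (2 * l) = A - l * p - q / l"
      unfolding A_def p_def q_def using l by (simp add: field_simps)
    finally show ?thesis by simp
  qed
  have p0: "0 \<le> p" unfolding p_def using eta_pos by simp
  have q0: "0 \<le> q" unfolding q_def using Kc0 by simp
  have Ebound: "A - 2 * sqrt (p * q) \<le> expectation (r T)" by (rule young_opt[OF p0 q0 E_l])
  have pq: "2 * sqrt (p * q) = r0 * sqrt (real T * Kc) * sqrt \<eta>"
  proof -
    have "p * q = (r0 * sqrt (real T * Kc) * sqrt \<eta> / 2)\<^sup>2"
      unfolding p_def q_def using eta_pos Kc0 by (simp add: power_mult_distrib power_divide)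
    then have "sqrt (p * q) = r0 * sqrt (real T * Kc) * sqrt \<eta> / 2"
      using r0pos Kc0 eta_pos by (simp add: abs_mult)
    then show ?thesis by simp
  qed
  have lr': "r0 * sqrt (real T * Kc) * sqrt \<eta> + K * r0\<^sup>2 / 2 * \<eta> + (\<sigma>\<^sub>f / (2 * sqrt a) - sqrt a / 2) \<le> 0"
    using lr unfolding r0_def[symmetric] K_def[symmetric] Kc_def[symmetric] .
  have "0 \<le> \<sigma>\<^sub>f / (2 * sqrt a)" using sigf_nonneg a_pos by simp
  moreover have "K * r0\<^sup>2 / 2 * \<eta> = K / 2 * \<eta> * r0\<^sup>2" by simp
  ultimately have "sqrt a / 2 \<le> A - 2 * sqrt (p * q)" using lr' unfolding pq A_def by linarith
  then show ?thesis using Ebound a_pos by simp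
qed

end
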